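(* Let $G$ be a mixed abelian group in which every subgroup is an essential subgroup of some direct summand of $G$. Then $G = D \oplus R$, where $D$ is a divisible group and $R$ is a reduced torsion-free group.
   Context: All groups are additively written abelian groups; a mixed group contains both non-zero elements of finite order and elements of infinite order. A subgroup $H$ of a group $A$ is essential in $A$ if $H \cap S \neq \{0\}$ for every non-zero subgroup $S$ of $A$. *)

theory Defs
  imports Main
begin

text \<open>The group G is modelled as the whole carrier UNIV of a type of class ab_group_add.\<close>

primrec nsmul :: "nat \<Rightarrow> 'a::ab_group_add \<Rightarrow> 'a" where
  "nsmul 0 x = 0"
| "nsmul (Suc n) x = x + nsmul n x"

definition subgrp :: "'a::ab_group_add set \<Rightarrow> bool" where
  "subgrp H \<longleftrightarrow> 0 \<in> H \<and> (\<forall>x\<in>H. \<forall>y\<in>H. x + y \<in> H) \<and> (\<forall>x\<in>H. - x \<in> H)"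

definition finite_order :: "'a::ab_group_add \<Rightarrow> bool" where
  "finite_order x \<longleftrightarrow> (\<exists>n>0. nsmul n x = 0)"

definition mixed_group :: "'a::ab_group_add itself \<Rightarrow> bool" where
  "mixed_group _ \<longleftrightarrow> (\<exists>x::'a. x \<noteq> 0 \<and> finite_order x) \<and> (\<exists>y::'a. \<not> finite_order y)"

definition essential_in :: "'a::ab_group_add set \<Rightarrow> 'a set \<Rightarrow> bool" where
  "essential_in H A \<longleftrightarrow> subgrp H \<and> H \<subseteq> A \<and>
     (\<forall>S. subgrp S \<and> S \<subseteq> A \<and> S \<noteq> {0} \<longrightarrow> H \<inter> S \<noteq> {0})"

definition direct_decomp :: "'a::ab_group_add set \<Rightarrow> 'a set \<Rightarrow> bool" where
  "direct_decomp A B \<longleftrightarrow> subgrp A \<and> subgrp B \<and> A \<inter> B = {0} \<and>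
     (\<forall>x. \<exists>a\<in>A. \<exists>b\<in>B. x = a + b)"

definition direct_summand :: "'a::ab_group_add set \<Rightarrow> bool" where
  "direct_summand A \<longleftrightarrow> (\<exists>B. direct_decomp A B)"

definition divisible :: "'a::ab_group_add set \<Rightarrow> bool" where
  "divisible D \<longleftrightarrow> subgrp D \<and> (\<forall>x\<in>D. \<forall>n>0. \<exists>y\<in>D. nsmul n y = x)"

definition reduced :: "'a::ab_group_add set \<Rightarrow> bool" where
  "reduced R \<longleftrightarrow> subgrp R \<and> (\<forall>D. D \<subseteq> R \<and> divisible D \<longrightarrow> D = {0})"

definition torsion_free :: "'a::ab_group_add set \<Rightarrow> bool" where
  "torsion_free R \<longleftrightarrow> subgrp R \<and> (\<forall>x\<in>R. x \<noteq> 0 \<longrightarrow> \<not> finite_order x)"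

end

theory Submission
  imports Defs
begin

lemma nsmul_add: "nsmul (m + n) x = nsmul m x + nsmul n x"
  by (induction m) (simp_all add: add.assoc)

lemma nsmul_zero[simp]: "nsmul n (0::'a::ab_group_add) = 0"
  by (induction n) simp_all

lemma nsmul_distrib: "nsmul n (x + y) = nsmul n x + nsmul n y"
  by (induction n) (simp_all add: algebra_simps)

lemma nsmul_mult: "nsmul (m * n) x = nsmul m (nsmul n x)"
  by (induction m) (simp_all add: nsmul_add)

lemma nsmul_minus: "nsmul n (- x) = - nsmul n (x::'a::ab_group_add)"
  by (induction n) (simp_all add: algebra_simps)

lemma nsmul_diff: "nsmul n (x - y) = nsmul n x - nsmul n (y::'a::ab_group_add)"
  using nsmul_distrib[of n x "-y"] nsmul_minus[of n y] by simp

lemma nsmul_sub: "k \<le> j \<Longrightarrow> nsmul j x - nsmul k x = nsmul (j - k) (x::'a::ab_group_add)"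
  using nsmul_add[of "j-k" k x] by simp

lemma subgrp_diff: "subgrp H \<Longrightarrow> x \<in> H \<Longrightarrow> y \<in> H \<Longrightarrow> x - y \<in> H"
  unfolding subgrp_def by (metis diff_conv_add_uminus)

lemma subgrp_nsmul: "subgrp H \<Longrightarrow> x \<in> H \<Longrightarrow> nsmul n x \<in> H"
  by (induction n) (auto simp: subgrp_def)

definition cyc :: "'a::ab_group_add \<Rightarrow> 'a set" where
  "cyc a = {x. \<exists>k. x = nsmul k a \<or> x = - nsmul k a}"

lemma cycE: "x \<in> cyc a \<Longrightarrow> \<exists>k. x = nsmul k a \<or> x = - nsmul k a"
  unfolding cyc_def mem_Collect_eq by assumption

lemma cyc_in: "a \<in> cyc a"
  unfolding cyc_def by (rule CollectI, rule exI[of _ 1]) simp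

lemma cyc_sub:
  assumes sH: "subgrp H" and aH: "a \<in> H"
  shows "cyc a \<subseteq> H"
proof
  fix x assume "x \<in> cyc a"
  then have "\<exists>k. x = nsmul k a \<or> x = - nsmul k a" by (rule cycE)
  then obtain k where k: "x = nsmul k a \<or> x = - nsmul k a" by (elim exE)
  have "nsmul k a \<in> H" using sH aH by (rule subgrp_nsmul)
  moreover then have "- nsmul k a \<in> H" using sH unfolding subgrp_def by blast
  ultimately show "x \<in> H" using k by blast
qed

lemma cyc_pm: "\<exists>k. nsmul i a - nsmul j (a::'a::ab_group_add) = nsmul k a \<or> nsmul i a - nsmul j a = - nsmul k a"
proof (cases "j \<le> i")
  case True
  then have "nsmul i a - nsmul j a = nsmul (i - j) a" by (rule nsmul_sub)
  then show ?thesis by blast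
next
  case False
  then have "nsmul j a - nsmul i a = nsmul (j - i) a" using nsmul_sub[of i j a] by simp
  then have "nsmul i a - nsmul j a = - nsmul (j - i) a" by (metis minus_diff_eq)
  then show ?thesis by blast
qed

lemma cyc_mem1: "nsmul k a \<in> cyc a"
  unfolding cyc_def by (rule CollectI, rule exI[of _ k]) simp

lemma cyc_mem2: "- nsmul k a \<in> cyc a"
  unfolding cyc_def by (rule CollectI, rule exI[of _ k]) simp

lemma cyc_mem3: "nsmul i a - nsmul j a \<in> cyc a"
proof -
  obtain k where "nsmul i a - nsmul j a = nsmul k a \<or> nsmul i a - nsmul j a = - nsmul k a"
    using cyc_pm by blast
  then show ?thesis using cyc_mem1 cyc_mem2 by metis
qed

lemma subgrp_cyc: "subgrp (cyc a)"
  unfolding subgrp_def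
proof (intro conjI ballI)
  show "0 \<in> cyc a" using cyc_mem1[of 0 a] by simp
next
  fix x y assume "x \<in> cyc a" "y \<in> cyc a"
  then obtain i j where x: "x = nsmul i a \<or> x = - nsmul i a" and y: "y = nsmul j a \<or> y = - nsmul j a"
    using cycE by metis
  have e1: "nsmul i a + nsmul j a = nsmul (i+j) a" by (simp add: nsmul_add)
  have e2: "- nsmul i a + - nsmul j a = - nsmul (i+j) a" by (simp add: nsmul_add)
  have e3: "nsmul i a + - nsmul j a = nsmul i a - nsmul j a" by simp
  have e4: "- nsmul i a + nsmul j a = nsmul j a - nsmul i a" by simp
  from x y show "x + y \<in> cyc a"
  proof (elim disjE)
    assume "x = nsmul i a" "y = nsmul j a" then show ?thesis using e1 cyc_mem1 by simp
  next
    assume "x = nsmul i a" "y = - nsmul j a" then show ?thesis using e3 cyc_mem3 by simp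
  next
    assume "x = - nsmul i a" "y = nsmul j a" then show ?thesis using e4 cyc_mem3 by simp
  next
    assume "x = - nsmul i a" "y = - nsmul j a" then show ?thesis using e2 cyc_mem2 by simp
  qed
next
  fix x assume "x \<in> cyc a"
  then have "\<exists>k. x = nsmul k a \<or> x = - nsmul k a" by (rule cycE)
  then obtain k where "x = nsmul k a \<or> x = - nsmul k a" by (elim exE)
  then show "- x \<in> cyc a" using cyc_mem1 cyc_mem2 by (metis minus_minus)
qed

lemma decomp_zero:
  assumes "direct_decomp A C" "a \<in> A" "c \<in> C" "a + c = 0"
  shows "a = 0" "c = 0"
proof -
  have "a = - c" using assms(4) by (simp add: eq_neg_iff_add_eq_0)
  moreover have "subgrp C" using assms(1) unfolding direct_decomp_def by blast
  ultimately have "a \<in> C" using assms(3) unfolding subgrp_def by blast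
  moreover have "A \<inter> C = {0}" using assms(1) unfolding direct_decomp_def by blast
  ultimately show "a = 0" using assms(2) by blast
  then show "c = 0" using assms(4) by simp
qed

lemma cyc_finite_order:
  assumes "x \<in> cyc h" "finite_order x" "\<not> finite_order h"
  shows "x = 0"
proof -
  obtain k where k: "x = nsmul k h \<or> x = - nsmul k h" using cycE[OF assms(1)] by (elim exE)
  obtain n where n: "n > 0" "nsmul n x = 0" using assms(2) unfolding finite_order_def by blast
  have "nsmul n (nsmul k h) = 0"
  proof (cases "x = nsmul k h")
    case True then show ?thesis using n(2) by simp
  next
    case False
    then have "x = - nsmul k h" using k by blast
    then have "- nsmul n (nsmul k h) = 0" using n(2) by (simp add: nsmul_minus)
    then show ?thesis by simp
  qed
  then have "nsmul (n*k) h = 0" by (simp add: nsmul_mult)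
  then have "\<not> (n * k > 0)" using assms(3) unfolding finite_order_def by metis
  then have "k = 0" using n(1) by simp
  then show ?thesis using k by simp
qed

lemma torsion_subgrp: "subgrp {x::'a::ab_group_add. finite_order x}"
  unfolding subgrp_def
proof (intro conjI ballI)
  have "nsmul 1 (0::'a) = 0" by simp
  then have "finite_order (0::'a)" unfolding finite_order_def by (intro exI[of _ 1]) simp
  then show "0 \<in> {x::'a. finite_order x}" by simp
next
  fix x y :: 'a assume "x \<in> {x. finite_order x}" "y \<in> {x. finite_order x}"
  then obtain n m where nm: "n > 0" "nsmul n x = 0" "m > 0" "nsmul m y = 0"
    unfolding finite_order_def by blast
  have "nsmul (m*n) x = nsmul m (nsmul n x)" by (rule nsmul_mult)
  then have x0: "nsmul (n*m) x = 0" using nm(2) by (simp add: mult.commute)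
  have y0: "nsmul (n*m) y = 0" using nm(4) by (simp add: nsmul_mult)
  have "nsmul (n*m) (x+y) = 0" using x0 y0 by (simp add: nsmul_distrib)
  moreover have "n * m > 0" using nm(1,3) by simp
  ultimately have "finite_order (x + y)" unfolding finite_order_def by blast
  then show "x + y \<in> {x. finite_order x}" by simp
next
  fix x :: 'a assume "x \<in> {x. finite_order x}"
  then obtain n where "n > 0" "nsmul n x = 0" unfolding finite_order_def by blast
  moreover then have "nsmul n (- x) = 0" by (simp add: nsmul_minus)
  ultimately have "finite_order (- x)" unfolding finite_order_def by blast
  then show "- x \<in> {x. finite_order x}" by simp
qed

lemma torsion_divisible:
  assumes "mixed_group TYPE('a::ab_group_add)"
    and hyp: "\<forall>H::'a set. subgrp H \<longrightarrow> (\<exists>A. direct_summand A \<and> essential_in H A)"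
  shows "divisible {x::'a. finite_order x}"
  unfolding divisible_def
proof (intro conjI ballI allI impI)
  show "subgrp {x::'a. finite_order x}" by (rule torsion_subgrp)
  fix u :: 'a and m :: nat assume u: "u \<in> {x. finite_order x}" and m: "m > 0"
  obtain y :: 'a where y: "\<not> finite_order y" using assms(1) unfolding mixed_group_def by blast
  obtain n where n: "n > 0" "nsmul n u = 0" using u unfolding finite_order_def by blast
  define h where "h = nsmul m y + u"
  have hinf: "\<not> finite_order h"
  proof
    assume "finite_order h"
    then obtain N where N: "N > 0" "nsmul N h = 0" unfolding finite_order_def by blast
    have "nsmul (n*N) h = nsmul (n*N*m) y + nsmul (N*n) u"
      unfolding h_def by (simp add: nsmul_distrib nsmul_mult[symmetric] mult.commute)
    also have "nsmul (N*n) u = 0" using n(2) by (simp add: nsmul_mult)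
    finally have "nsmul (n*N*m) y = 0" using N(2) by (simp add: nsmul_mult[of n N])
    moreover have "n*N*m > 0" using n(1) N(1) m by simp
    ultimately show False using y unfolding finite_order_def by blast
  qed
  obtain A where A: "direct_summand A" "essential_in (cyc h) A" using hyp subgrp_cyc by blast
  obtain C where dc: "direct_decomp A C" using A(1) unfolding direct_summand_def by blast
  have sA: "subgrp A" and sC: "subgrp C" using dc unfolding direct_decomp_def by auto
  have hA: "h \<in> A" using A(2) cyc_in unfolding essential_in_def by blast
  have Ator: "a = 0" if "a \<in> A" "finite_order a" for a
  proof (rule ccontr)
    assume "a \<noteq> 0"
    then have "cyc a \<noteq> {0}" using cyc_in by blast
    moreover have "cyc a \<subseteq> A" using cyc_sub sA that(1) by blast
    ultimately have "cyc h \<inter> cyc a \<noteq> {0}" using A(2) subgrp_cyc unfolding essential_in_def by blast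
    moreover have "0 \<in> cyc h \<inter> cyc a" using subgrp_cyc unfolding subgrp_def by blast
    ultimately obtain x where x: "x \<in> cyc h" "x \<in> cyc a" "x \<noteq> 0" by blast
    have "finite_order x"
      using torsion_subgrp cyc_sub[of "{x. finite_order x}" a] x(2) that(2) by blast
    then show False using cyc_finite_order x hinf by blast
  qed
  obtain au cu where aucu: "au \<in> A" "cu \<in> C" "u = au + cu" using dc unfolding direct_decomp_def by blast
  obtain ay cy where aycy: "ay \<in> A" "cy \<in> C" "y = ay + cy" using dc unfolding direct_decomp_def by blast
  have "nsmul n au + nsmul n cu = 0" using n(2) aucu(3) by (simp add: nsmul_distrib)
  then have "nsmul n au = 0" using decomp_zero(1)[OF dc] subgrp_nsmul sA sC aucu by blast
  then have "au = 0" using Ator aucu(1) n(1) unfolding finite_order_def by blast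
  then have uC: "u \<in> C" using aucu by simp
  have "nsmul m cy + u = h - nsmul m ay" unfolding h_def using aycy(3) by (simp add: nsmul_distrib)
  also have "\<dots> \<in> A" using hA aycy(1) sA subgrp_nsmul subgrp_diff by blast
  finally have "nsmul m cy + u \<in> A" .
  moreover have "nsmul m cy + u \<in> C" using sC subgrp_nsmul aycy(2) uC unfolding subgrp_def by blast
  ultimately have "nsmul m cy + u = 0" using dc unfolding direct_decomp_def by blast
  then have "u = - nsmul m cy" by (metis add_eq_0_iff)
  then have wu: "nsmul m (- cy) = u" by (simp add: nsmul_minus)
  have "nsmul (n*m) (- cy) = 0" using wu n(2) by (simp add: nsmul_mult)
  moreover have "n*m > 0" using n(1) m by simp
  ultimately have "finite_order (- cy)" unfolding finite_order_def by blast
  then show "\<exists>w\<in>{x. finite_order x}. nsmul m w = u" using wu by blast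
qed

definition dmax :: "'a::ab_group_add set" where
  "dmax = {x. \<exists>D. divisible D \<and> x \<in> D}"

lemma divisible_sum:
  assumes "divisible D1" "divisible D2"
  shows "divisible {a + b | a b. a \<in> D1 \<and> b \<in> D2}"
proof -
  have s1: "subgrp D1" and s2: "subgrp D2" using assms unfolding divisible_def by auto
  have "subgrp {a + b | a b. a \<in> D1 \<and> b \<in> D2}"
    unfolding subgrp_def
  proof (intro conjI ballI)
    show "0 \<in> {a + b | a b. a \<in> D1 \<and> b \<in> D2}" using s1 s2 unfolding subgrp_def by force
  next
    fix x y assume "x \<in> {a + b | a b. a \<in> D1 \<and> b \<in> D2}" "y \<in> {a + b | a b. a \<in> D1 \<and> b \<in> D2}"
    then obtain a b c d where "a \<in> D1" "b \<in> D2" "c \<in> D1" "d \<in> D2" "x = a + b" "y = c + d" by blast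
    moreover have "a + b + (c + d) = (a + c) + (b + d)" by (simp add: algebra_simps)
    ultimately show "x + y \<in> {a + b | a b. a \<in> D1 \<and> b \<in> D2}" using s1 s2 unfolding subgrp_def by blast
  next
    fix x assume "x \<in> {a + b | a b. a \<in> D1 \<and> b \<in> D2}"
    then obtain a b where "a \<in> D1" "b \<in> D2" "x = a + b" by blast
    moreover have "- (a + b) = - a + - b" by simp
    ultimately show "- x \<in> {a + b | a b. a \<in> D1 \<and> b \<in> D2}" using s1 s2 unfolding subgrp_def by blast
  qed
  moreover have "\<exists>y\<in>{a + b | a b. a \<in> D1 \<and> b \<in> D2}. nsmul n y = x"
    if xin: "x \<in> {a + b | a b. a \<in> D1 \<and> b \<in> D2}" and npos: "n > 0" for x n
  proof -
    obtain a b where ab: "a \<in> D1" "b \<in> D2" "x = a + b" using xin by blast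
    obtain a' where "a' \<in> D1" "nsmul n a' = a" using assms(1) ab(1) npos unfolding divisible_def by blast
    moreover obtain b' where "b' \<in> D2" "nsmul n b' = b" using assms(2) ab(2) npos unfolding divisible_def by blast
    ultimately show ?thesis using ab(3) by (intro bexI[of _ "a' + b'"]) (auto simp: nsmul_distrib)
  qed
  ultimately show ?thesis unfolding divisible_def by blast
qed

lemma divisible_dmax: "divisible (dmax :: 'a::ab_group_add set)"
proof -
  have "divisible ({0} :: 'a set)" unfolding divisible_def subgrp_def by simp
  then have z: "0 \<in> (dmax :: 'a set)" unfolding dmax_def by blast
  have "subgrp (dmax :: 'a set)"
    unfolding subgrp_def
  proof (intro conjI ballI)
    show "0 \<in> (dmax :: 'a set)" by (rule z)
  next
    fix x y :: 'a assume "x \<in> dmax" "y \<in> dmax"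
    then obtain D1 D2 where "divisible D1" "x \<in> D1" "divisible D2" "y \<in> D2" unfolding dmax_def by blast
    then have "divisible {a + b | a b. a \<in> D1 \<and> b \<in> D2}" "x + y \<in> {a + b | a b. a \<in> D1 \<and> b \<in> D2}"
      using divisible_sum[of D1 D2] by auto
    then show "x + y \<in> dmax" unfolding dmax_def by blast
  next
    fix x :: 'a assume "x \<in> dmax"
    then obtain D where "divisible D" "x \<in> D" unfolding dmax_def by blast
    then have "- x \<in> D" unfolding divisible_def subgrp_def by blast
    then show "- x \<in> dmax" using \<open>divisible D\<close> unfolding dmax_def by blast
  qed
  moreover have "\<exists>y\<in>dmax. nsmul n y = x" if xd: "x \<in> dmax" and npos: "n > 0" for x :: 'a and n
  proof -
    obtain D where D: "divisible D" "x \<in> D" using xd unfolding dmax_def by blast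
    then obtain y where "y \<in> D" "nsmul n y = x" using npos unfolding divisible_def by blast
    then show ?thesis using D(1) unfolding dmax_def by blast
  qed
  ultimately show ?thesis unfolding divisible_def by blast
qed

lemma divisible_sub_dmax: "divisible D \<Longrightarrow> D \<subseteq> dmax"
  unfolding dmax_def by blast

lemma essential_divisible_eq:
  assumes ess: "essential_in D A" and dD: "divisible D" and sA: "subgrp A"
  shows "A \<subseteq> D"
proof
  fix a assume aA: "a \<in> A"
  show "a \<in> D"
  proof (rule ccontr)
    assume anD: "a \<notin> D"
    have sD: "subgrp D" using dD unfolding divisible_def by blast
    have DA: "D \<subseteq> A" using ess unfolding essential_in_def by blast
    obtain c where cA: "c \<in> A" and cne: "c \<noteq> 0" and cD: "\<And>k. nsmul k c \<in> D \<Longrightarrow> nsmul k c = 0"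
    proof (cases "\<exists>n>0. nsmul n a \<in> D")
      case True
      define n where "n = (LEAST n. n > 0 \<and> nsmul n a \<in> D)"
      have n: "n > 0" "nsmul n a \<in> D" using LeastI_ex[OF True] unfolding n_def by auto
      have nmin: "\<And>r. r < n \<Longrightarrow> r > 0 \<Longrightarrow> nsmul r a \<notin> D" using not_less_Least unfolding n_def by blast
      obtain d where d: "d \<in> D" "nsmul n d = nsmul n a" using dD n unfolding divisible_def by blast
      define c where "c = a - d"
      have "c \<in> A" unfolding c_def using aA d(1) DA sA subgrp_diff by blast
      moreover have "c \<noteq> 0" unfolding c_def using anD d(1) by auto
      moreover have "nsmul k c = 0" if kc: "nsmul k c \<in> D" for k
      proof -
        have "nsmul k a = nsmul k c + nsmul k d" unfolding c_def by (simp add: nsmul_diff)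
        moreover have "nsmul k d \<in> D" using sD d(1) by (rule subgrp_nsmul)
        then have "nsmul k c + nsmul k d \<in> D" using kc sD unfolding subgrp_def by blast
        ultimately have kaD: "nsmul k a \<in> D" by simp
        have kk: "k = (k div n) * n + k mod n" by simp
        have "nsmul ((k div n) * n + k mod n) a = nsmul (k div n) (nsmul n a) + nsmul (k mod n) a"
          by (simp only: nsmul_add nsmul_mult)
        then have "nsmul k a = nsmul (k div n) (nsmul n a) + nsmul (k mod n) a"
          by (simp only: kk[symmetric])
        then have "nsmul (k mod n) a = nsmul k a - nsmul (k div n) (nsmul n a)" by simp
        also have "\<dots> \<in> D" using kaD n(2) sD subgrp_nsmul subgrp_diff by blast
        finally have "nsmul (k mod n) a \<in> D" .
        moreover have "k mod n < n" using n(1) by simp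
        ultimately have km: "k mod n = 0" using nmin[of "k mod n"] by auto
        have "nsmul ((k div n) * n + k mod n) c = nsmul (k div n) (nsmul n c)"
          using km by (simp only: nsmul_mult add_0_right)
        then have "nsmul k c = nsmul (k div n) (nsmul n c)" by (simp only: kk[symmetric])
        also have "nsmul n c = 0" unfolding c_def by (simp add: nsmul_diff d(2))
        finally show ?thesis by simp
      qed
      ultimately show ?thesis by (rule that)
    next
      case False
      have an0: "a \<noteq> 0" using anD sD unfolding subgrp_def by blast
      have "nsmul k a = 0" if kD: "nsmul k a \<in> D" for k
      proof (cases k)
        case 0 then show ?thesis by simp
      next
        case (Suc m)
        then have "k > 0" by simp
        then show ?thesis using False kD by blast
      qed
      then show ?thesis by (rule that[OF aA an0])
    qed
    have "cyc c \<subseteq> A" using cyc_sub sA cA by blast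
    moreover have "cyc c \<noteq> {0}" using cyc_in cne by blast
    ultimately have "D \<inter> cyc c \<noteq> {0}" using ess subgrp_cyc unfolding essential_in_def by blast
    moreover have "0 \<in> D \<inter> cyc c" using sD subgrp_cyc unfolding subgrp_def by blast
    ultimately obtain x where x: "x \<in> D" "x \<in> cyc c" "x \<noteq> 0" by blast
    obtain k where k: "x = nsmul k c \<or> x = - nsmul k c" using cycE[OF x(2)] by (elim exE)
    have "nsmul k c \<in> D"
    proof (cases "x = nsmul k c")
      case True then show ?thesis using x(1) by simp
    next
      case False
      then have "nsmul k c = - x" using k by simp
      then show ?thesis using x(1) sD unfolding subgrp_def by simp
    qed
    then have "nsmul k c = 0" by (rule cD)
    then show False using k x(3) by auto
  qed
qed

theorem corollary2p16:
  assumes "mixed_group TYPE('a::ab_group_add)"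
    and "\<forall>H::'a set. subgrp H \<longrightarrow> (\<exists>A. direct_summand A \<and> essential_in H A)"
  shows "\<exists>D R::'a set. direct_decomp D R \<and> divisible D \<and> reduced R \<and> torsion_free R"
proof -
  have dd: "divisible (dmax :: 'a set)" by (rule divisible_dmax)
  then have "subgrp (dmax :: 'a set)" unfolding divisible_def by blast
  then obtain A where A: "direct_summand A" "essential_in (dmax :: 'a set) A" using assms(2) by blast
  obtain B where dc: "direct_decomp A B" using A(1) unfolding direct_summand_def by blast
  have "A \<subseteq> dmax" using essential_divisible_eq A(2) dd dc unfolding direct_decomp_def by blast
  moreover have "dmax \<subseteq> A" using A(2) unfolding essential_in_def by blast
  ultimately have AD: "A = dmax" by blast
  have sB: "subgrp B" using dc unfolding direct_decomp_def by blast
  have int: "dmax \<inter> B = {0}" using dc AD unfolding direct_decomp_def by blast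
  have "reduced B" unfolding reduced_def
  proof (intro conjI allI impI sB)
    fix E assume E: "E \<subseteq> B \<and> divisible E"
    then have "E \<subseteq> dmax" using divisible_sub_dmax by blast
    moreover have "0 \<in> E" using E unfolding divisible_def subgrp_def by blast
    ultimately show "E = {0}" using int E by blast
  qed
  moreover have "torsion_free B" unfolding torsion_free_def
  proof (intro conjI ballI impI sB)
    fix x assume "x \<in> B" "x \<noteq> 0"
    show "\<not> finite_order x"
    proof
      assume "finite_order x"
      then have "x \<in> dmax" using divisible_sub_dmax[OF torsion_divisible[OF assms]] by blast
      then show False using int \<open>x \<in> B\<close> \<open>x \<noteq> 0\<close> by blast
    qed
  qed
  ultimately show ?thesis using dc AD dd by blast
qed

end
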